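(* Let $(V,g)$ be a Euclidean vector space and $\mathfrak{g}\subseteq\mathfrak{so}(V)$ a Lie subalgebra. Suppose there exists $T\in\Lambda^3V$ which is $\mathfrak{g}$-invariant, non-degenerate (i.e. $X\lrcorner T=0$ implies $X=0$) and satisfies $X\lrcorner T\in\mathfrak{g}^{\perp}$ for all $X\in V$. Then $\mathrm{Ric}(R)=0$ for every $R\in\mathcal{K}(\mathfrak{g},V)$.
   Context: $\Lambda^2V$ is identified with $\mathfrak{so}(V)$ via $F\mapsto g(F\cdot,\cdot)$; $\mathfrak{g}^\perp$ is the orthogonal complement of $\mathfrak{g}$ in $\Lambda^2V$. $\mathcal{K}(\mathfrak{g},V)$ is the space of algebraic curvature tensors with values in $\mathfrak{g}$: $R\in\Lambda^2V\otimes\Lambda^2V$ with $R(X,Y)\in\mathfrak{g}$ for all $X,Y$ and satisfying the first Bianchi identity $\sum_i e_i\wedge R(e_i,X)=0$ for all $X$ (equivalently, $R$ is symmetric in the two pairs and its total alternation in $\Lambda^4V$ vanishes). The Ricci contraction is $\mathrm{Ric}(R)(X,Y)=\sum_iR(X,e_i,Y,e_i)$ for an orthonormal basis $\{e_i\}$. *)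

theory Defs
  imports "HOL-Analysis.Analysis"
begin

text \<open>Lambda^2 V is identified with so(V) via F maps to g(F.,.).\<close>

definition so_elem :: "('a::euclidean_space \<Rightarrow> 'a) \<Rightarrow> bool" where
  "so_elem F \<longleftrightarrow> linear F \<and> (\<forall>x y. F x \<bullet> y = - (x \<bullet> F y))"

definition lie_subalgebra :: "('a::euclidean_space \<Rightarrow> 'a) set \<Rightarrow> bool" where
  "lie_subalgebra G \<longleftrightarrow>
     (\<forall>F\<in>G. so_elem F) \<and> (\<lambda>x. 0) \<in> G \<and>
     (\<forall>F\<in>G. \<forall>H\<in>G. (\<lambda>x. F x + H x) \<in> G) \<and>
     (\<forall>c::real. \<forall>F\<in>G. (\<lambda>x. c *\<^sub>R F x) \<in> G) \<and>
     (\<forall>F\<in>G. \<forall>H\<in>G. (\<lambda>x. F (H x) - H (F x)) \<in> G)"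

text \<open>Inner product on Lambda^2 V = so(V) (up to a positive constant, irrelevant for
orthogonality): sum over the orthonormal basis.\<close>
definition so_inner :: "('a::euclidean_space \<Rightarrow> 'a) \<Rightarrow> ('a \<Rightarrow> 'a) \<Rightarrow> real" where
  "so_inner F H = (\<Sum>i\<in>Basis. \<Sum>j\<in>Basis. (F i \<bullet> j) * (H i \<bullet> j))"

definition so_perp :: "('a::euclidean_space \<Rightarrow> 'a) set \<Rightarrow> ('a \<Rightarrow> 'a) set" where
  "so_perp G = {F. so_elem F \<and> (\<forall>H\<in>G. so_inner F H = 0)}"

definition three_form :: "('a::euclidean_space \<Rightarrow> 'a \<Rightarrow> 'a \<Rightarrow> real) \<Rightarrow> bool" where
  "three_form T \<longleftrightarrow>
     (\<forall>y z. linear (\<lambda>x. T x y z)) \<and> (\<forall>x z. linear (\<lambda>y. T x y z)) \<and>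
     (\<forall>x y. linear (\<lambda>z. T x y z)) \<and>
     (\<forall>x y z. T y x z = - T x y z) \<and> (\<forall>x y z. T x z y = - T x y z)"

text \<open>The endomorphism in so(V) corresponding to a 2-form omega, i.e. g(F Y, Z) = omega(Y,Z).\<close>
definition form_to_endo :: "('a::euclidean_space \<Rightarrow> 'a \<Rightarrow> real) \<Rightarrow> 'a \<Rightarrow> 'a" where
  "form_to_endo \<omega> = (\<lambda>y. \<Sum>b\<in>Basis. \<omega> y b *\<^sub>R b)"

definition interior3 :: "'a::euclidean_space \<Rightarrow> ('a \<Rightarrow> 'a \<Rightarrow> 'a \<Rightarrow> real) \<Rightarrow> 'a \<Rightarrow> 'a" where
  "interior3 X T = form_to_endo (\<lambda>y z. T X y z)"

definition invariant3 :: "('a::euclidean_space \<Rightarrow> 'a) set \<Rightarrow> ('a \<Rightarrow> 'a \<Rightarrow> 'a \<Rightarrow> real) \<Rightarrow> bool" where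
  "invariant3 G T \<longleftrightarrow>
     (\<forall>A\<in>G. \<forall>x y z. T (A x) y z + T x (A y) z + T x y (A z) = 0)"

definition nondegenerate3 :: "('a::euclidean_space \<Rightarrow> 'a \<Rightarrow> 'a \<Rightarrow> real) \<Rightarrow> bool" where
  "nondegenerate3 T \<longleftrightarrow> (\<forall>X. (\<forall>y z. T X y z = 0) \<longrightarrow> X = 0)"

text \<open>Algebraic curvature tensors with values in G, as 4-linear forms
R(X,Y,Z,W) = g(R(X,Y)Z,W).\<close>
definition curv_tensors ::
  "('a::euclidean_space \<Rightarrow> 'a) set \<Rightarrow> ('a \<Rightarrow> 'a \<Rightarrow> 'a \<Rightarrow> 'a \<Rightarrow> real) set" where
  "curv_tensors G = {R.
     (\<forall>y z w. linear (\<lambda>x. R x y z w)) \<and> (\<forall>x z w. linear (\<lambda>y. R x y z w)) \<and>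
     (\<forall>x y w. linear (\<lambda>z. R x y z w)) \<and> (\<forall>x y z. linear (\<lambda>w. R x y z w)) \<and>
     (\<forall>x y z w. R y x z w = - R x y z w) \<and>
     (\<forall>x y z w. R x y w z = - R x y z w) \<and>
     (\<forall>x y z w. R z w x y = R x y z w) \<and>
     (\<forall>x y z w. R x y z w + R y z x w + R z x y w = 0) \<and>
     (\<forall>x y. form_to_endo (R x y) \<in> G)}"

definition Ric :: "('a::euclidean_space \<Rightarrow> 'a \<Rightarrow> 'a \<Rightarrow> 'a \<Rightarrow> real) \<Rightarrow> 'a \<Rightarrow> 'a \<Rightarrow> real" where
  "Ric R X Y = (\<Sum>i\<in>Basis. R X i Y i)"

end

theory Submission
  imports Defs
begin

lemma lin_sum_scale:
  assumes "linear (f::'a::euclidean_space \<Rightarrow> real)"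
  shows "f (\<Sum>b\<in>Basis. c b *\<^sub>R b) = (\<Sum>b\<in>Basis. c b * f b)"
  using assms by (simp add: linear_sum linear_scale o_def)

lemma lin_exp:
  assumes "linear (f::'a::euclidean_space \<Rightarrow> real)"
  shows "f x = (\<Sum>b\<in>Basis. (x \<bullet> b) * f b)"
proof -
  have "f x = f (\<Sum>b\<in>Basis. (x \<bullet> b) *\<^sub>R b)" by (simp add: euclidean_representation)
  also have "\<dots> = (\<Sum>b\<in>Basis. (x \<bullet> b) * f b)" by (rule lin_sum_scale[OF assms])
  finally show ?thesis .
qed

lemma endo_inner:
  assumes "(b::'a::euclidean_space) \<in> Basis"
  shows "form_to_endo \<omega> i \<bullet> b = \<omega> i b"
  using assms by (simp add: form_to_endo_def inner_sum_left inner_Basis if_distrib cong: if_cong)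

theorem proposition2p4:
  fixes G :: "('a::euclidean_space \<Rightarrow> 'a) set"
    and T :: "'a \<Rightarrow> 'a \<Rightarrow> 'a \<Rightarrow> real"
  assumes "lie_subalgebra G"
    and "three_form T"
    and "invariant3 G T"
    and "nondegenerate3 T"
    and "\<forall>X. interior3 X T \<in> so_perp G"
  shows "\<forall>R\<in>curv_tensors G. \<forall>X Y. Ric R X Y = 0"
proof (intro ballI allI)
  fix R assume R: "R \<in> curv_tensors G"
  have l1: "\<And>y z. linear (\<lambda>x. T x y z)" and l2: "\<And>x z. linear (\<lambda>y. T x y z)"
    and l3: "\<And>x y. linear (\<lambda>z. T x y z)" and a1: "\<And>x y z. T y x z = - T x y z"
    and a2: "\<And>x y z. T x z y = - T x y z"
    using assms(2) unfolding three_form_def by blast+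
  have Rc: "(\<forall>x y w. linear (\<lambda>z. R x y z w)) \<and> (\<forall>x y z w. R y x z w = - R x y z w) \<and>
     (\<forall>x y z w. R x y w z = - R x y z w) \<and> (\<forall>x y z w. R z w x y = R x y z w) \<and>
     (\<forall>x y z w. R x y z w + R y z x w + R z x y w = 0) \<and> (\<forall>x y. form_to_endo (R x y) \<in> G)"
    using R unfolding curv_tensors_def mem_Collect_eq by (elim conjE) (intro conjI)
  have Rl3: "\<And>x y w. linear (\<lambda>z. R x y z w)" using Rc[THEN conjunct1] by blast
  have Ra1: "\<And>x y z w. R y x z w = - R x y z w" using Rc by blast
  have Ra2: "\<And>x y z w. R x y w z = - R x y z w" using Rc by blast
  have Rs: "\<And>x y z w. R z w x y = R x y z w" using Rc by blast
  have Rb: "\<And>x y z w. R x y z w + R y z x w + R z x y w = 0" using Rc by blast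
  have RG: "\<And>x y. form_to_endo (R x y) \<in> G" using Rc by blast
  have perp: "(\<Sum>i\<in>Basis. \<Sum>j\<in>Basis. T X i j * R Y Z i j) = 0" for X Y Z
  proof -
    have "so_inner (interior3 X T) (form_to_endo (R Y Z)) = 0"
      using assms(5) RG unfolding so_perp_def by blast
    thus ?thesis unfolding so_inner_def interior3_def by (simp add: endo_inner)
  qed
  have I1: "(\<Sum>i\<in>Basis. \<Sum>j\<in>Basis. T X i j * R Y i Z j) = 0" for X Y Z
  proof -
    define S0 where "S0 = (\<Sum>i\<in>Basis. \<Sum>j\<in>Basis. T X i j * R i j Y Z)"
    define S1 where "S1 = (\<Sum>i\<in>Basis. \<Sum>j\<in>Basis. T X i j * R j Y i Z)"
    define S2 where "S2 = (\<Sum>i\<in>Basis. \<Sum>j\<in>Basis. T X i j * R Y i j Z)"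
    have "S0 = 0" unfolding S0_def using perp[of X Y Z] Rs[of _ _ Y Z] by simp
    have "S0 + S1 + S2 = (\<Sum>i\<in>Basis. \<Sum>j\<in>Basis. T X i j * (R i j Y Z + R j Y i Z + R Y i j Z))"
      unfolding S0_def S1_def S2_def by (simp add: sum.distrib algebra_simps)
    also have "\<dots> = 0" by (simp add: Rb)
    finally have e: "S0 + S1 + S2 = 0" .
    have "S1 = - (\<Sum>i\<in>Basis. \<Sum>j\<in>Basis. T X i j * R Y j i Z)"
      unfolding S1_def using Ra1[of Y _ _ Z] by (simp add: sum_negf)
    also have "(\<Sum>i\<in>Basis. \<Sum>j\<in>Basis. T X i j * R Y j i Z) = (\<Sum>j\<in>Basis. \<Sum>i\<in>Basis. T X i j * R Y j i Z)"
      by (rule sum.swap)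
    also have "\<dots> = - S2"
    proof -
      have r: "\<And>i j. T X i j * R Y j i Z = - (T X j i * R Y j i Z)" by (metis a2 mult_minus_left)
      show ?thesis unfolding S2_def by (simp only: r sum_negf)
    qed
    finally have "S1 = S2" by simp
    with e \<open>S0 = 0\<close> have "S2 = 0" by simp
    thus ?thesis unfolding S2_def using Ra2[of Y _ _ Z] by (simp add: sum_negf)
  qed
  have key: "(\<Sum>b\<in>Basis. Ric R Y b * T x y b) = 0" for Y x y
  proof -
    have inv: "T (form_to_endo (R Y k) x) y k + T x (form_to_endo (R Y k) y) k
             + T x y (form_to_endo (R Y k) k) = 0" for k
      using assms(3) RG unfolding invariant3_def by blast
    have exp: "T (form_to_endo (R Y k) x) y k + T x (form_to_endo (R Y k) y) k
             + T x y (form_to_endo (R Y k) k) =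
       (\<Sum>b\<in>Basis. R Y k x b * T b y k) + (\<Sum>b\<in>Basis. R Y k y b * T x b k)
       + (\<Sum>b\<in>Basis. R Y k k b * T x y b)" for k
      unfolding form_to_endo_def
      by (simp add: lin_sum_scale[OF l1] lin_sum_scale[OF l2] lin_sum_scale[OF l3])
    have "0 = (\<Sum>k\<in>Basis. (\<Sum>b\<in>Basis. R Y k x b * T b y k) + (\<Sum>b\<in>Basis. R Y k y b * T x b k)
       + (\<Sum>b\<in>Basis. R Y k k b * T x y b))"
      using inv exp by simp
    also have "\<dots> = (\<Sum>k\<in>Basis. \<Sum>b\<in>Basis. R Y k x b * T b y k) + (\<Sum>k\<in>Basis. \<Sum>b\<in>Basis. R Y k y b * T x b k)
       + (\<Sum>k\<in>Basis. \<Sum>b\<in>Basis. R Y k k b * T x y b)" by (simp add: sum.distrib)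
    also have "(\<Sum>k\<in>Basis. \<Sum>b\<in>Basis. R Y k x b * T b y k) = 0"
    proof -
      have "T b y k = T y k b" for b k using a1[of b y] a2[of y b k] by simp
      hence "(\<Sum>k\<in>Basis. \<Sum>b\<in>Basis. R Y k x b * T b y k) = (\<Sum>k\<in>Basis. \<Sum>b\<in>Basis. T y k b * R Y k x b)"
        by (simp add: mult.commute)
      thus ?thesis using I1[of y Y x] by simp
    qed
    also have "(\<Sum>k\<in>Basis. \<Sum>b\<in>Basis. R Y k y b * T x b k) = 0"
    proof -
      have "(\<Sum>k\<in>Basis. \<Sum>b\<in>Basis. R Y k y b * T x b k) = - (\<Sum>k\<in>Basis. \<Sum>b\<in>Basis. T x k b * R Y k y b)"
        proof -
          have r: "\<And>b k. R Y k y b * T x b k = - (T x k b * R Y k y b)" by (metis a2 mult_minus_left mult.commute)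
          show ?thesis by (simp only: r sum_negf)
        qed
      thus ?thesis using I1[of x Y y] by simp
    qed
    also have "(\<Sum>k\<in>Basis. \<Sum>b\<in>Basis. R Y k k b * T x y b) = (\<Sum>b\<in>Basis. \<Sum>k\<in>Basis. R Y k k b * T x y b)"
      by (rule sum.swap)
    also have "\<dots> = - (\<Sum>b\<in>Basis. Ric R Y b * T x y b)"
      unfolding Ric_def sum_distrib_right sum_negf[symmetric]
      by (intro sum.cong refl) (metis Ra2 mult_minus_left)
    finally show ?thesis by simp
  qed
  have RicB: "Ric R Y b = 0" if b: "b \<in> Basis" for Y b
  proof -
    define v where "v = (\<Sum>b\<in>Basis. Ric R Y b *\<^sub>R b)"
    have "T v x y = 0" for x y
    proof -
      have "T v x y = T x y v" using a1[of x v] a2[of x v y] by simp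
      also have "\<dots> = (\<Sum>b\<in>Basis. Ric R Y b * T x y b)" unfolding v_def by (rule lin_sum_scale[OF l3])
      finally show ?thesis using key by simp
    qed
    hence "v = 0" using assms(4) unfolding nondegenerate3_def by blast
    hence "v \<bullet> b = 0" by simp
    thus ?thesis unfolding v_def by (simp add: endo_inner[OF b, of "\<lambda>_ b. Ric R Y b", unfolded form_to_endo_def])
  qed
  fix X Y
  have lr: "linear (\<lambda>W. Ric R X W)" unfolding Ric_def
    by (intro linear_compose_sum) (simp add: Rl3)
  show "Ric R X Y = 0" using lin_exp[OF lr, of Y] RicB by simp
qed

end
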